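(* Let $m\ge 1$ and $n\ge 3$ be odd integers, $k=1$, and $g\ge3$. Then an $RSM_\Gamma(\Gamma,g;[\,^{8mn-1}m,\ ^{1}2n])$ exists.
   Context: Here $G=\mathbb{Z}_m\times\mathbb{Z}_{4n}$ and $\Gamma$ is the generalized dihedral group on $G$: underlying set $G\times\mathbb{Z}_2$ with operation $(x,\tau)+(x',\tau')=(x+(-1)^\tau x',\tau+\tau')$. $[\,^{a}x,\,^{b}y]$ denotes the multiset with $a$ copies of $x$ and $b$ copies of $y$. An $RSM_\Gamma(\Gamma,g;L)$, for a list $L$ of $|\Gamma|$ positive integers, is a $|\Gamma|\times g$ matrix with entries in $\Gamma$ such that each column is a permutation (arrangement) of $\Gamma$ and the multiset of orders of the left-to-right row sums equals $L$. *)

theory Defs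
  imports Main "HOL-Library.Multiset"
begin

text \<open>Generalized dihedral group on G = Z_m x Z_(4n). Elements are ((a,b),t) with
  0 <= a < m, 0 <= b < 4n and t :: bool encoding Z_2 (False = 0, True = 1).\<close>

type_synonym gdih = "(int \<times> int) \<times> bool"

definition gd_carrier :: "nat \<Rightarrow> nat \<Rightarrow> gdih set" where
  "gd_carrier m n = {((a,b),t). 0 \<le> a \<and> a < int m \<and> 0 \<le> b \<and> b < 4 * int n}"

fun gd_add :: "nat \<Rightarrow> nat \<Rightarrow> gdih \<Rightarrow> gdih \<Rightarrow> gdih" where
  "gd_add m n ((a,b),t) ((a',b'),t') =
     (((a + (if t then - a' else a')) mod int m,
       (b + (if t then - b' else b')) mod (4 * int n)),
      t \<noteq> t')"

definition gd_zero :: gdih where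
  "gd_zero = ((0,0),False)"

fun gd_pow :: "nat \<Rightarrow> nat \<Rightarrow> nat \<Rightarrow> gdih \<Rightarrow> gdih" where
  "gd_pow m n 0 x = gd_zero"
| "gd_pow m n (Suc k) x = gd_add m n (gd_pow m n k x) x"

definition gd_ord :: "nat \<Rightarrow> nat \<Rightarrow> gdih \<Rightarrow> nat" where
  "gd_ord m n x = (LEAST k. 0 < k \<and> gd_pow m n k x = gd_zero)"

definition row_sum :: "nat \<Rightarrow> nat \<Rightarrow> (nat \<Rightarrow> nat \<Rightarrow> gdih) \<Rightarrow> nat \<Rightarrow> nat \<Rightarrow> gdih" where
  "row_sum m n M g i = foldl (gd_add m n) gd_zero (map (M i) [0..<g])"

text \<open>RSM_Gamma(Gamma,g;L): a |Gamma| x g matrix (rows i < |Gamma|, columns j < g) whose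
  columns are arrangements of Gamma and whose row-sum orders form the multiset L.\<close>
definition is_RSM :: "nat \<Rightarrow> nat \<Rightarrow> nat \<Rightarrow> nat multiset \<Rightarrow> (nat \<Rightarrow> nat \<Rightarrow> gdih) \<Rightarrow> bool" where
  "is_RSM m n g L M \<longleftrightarrow>
     (\<forall>j<g. bij_betw (\<lambda>i. M i j) {..<card (gd_carrier m n)} (gd_carrier m n)) \<and>
     image_mset (\<lambda>i. gd_ord m n (row_sum m n M g i)) (mset [0..<card (gd_carrier m n)]) = L"

end

theory Submission
  imports Defs
begin


abbreviation "CC m n \<equiv> gd_carrier m n"

lemma mem_C: "((a,b),t) \<in> gd_carrier m n \<longleftrightarrow> 0 \<le> a \<and> a < int m \<and> 0 \<le> b \<and> b < 4 * int n"
  by (simp add: gd_carrier_def)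

lemma gd_add_assoc: "gd_add m n (gd_add m n x y) z = gd_add m n x (gd_add m n y z)"
  by (cases x; cases y; cases z) (auto simp: mod_simps algebra_simps)

lemma gd_add_C: "m \<ge> 1 \<Longrightarrow> n \<ge> 1 \<Longrightarrow> gd_add m n x y \<in> gd_carrier m n"
  by (cases x; cases y) (auto simp: mem_C)

lemma gd_zero_add: "x \<in> gd_carrier m n \<Longrightarrow> gd_add m n gd_zero x = x"
  by (cases x) (auto simp: mem_C gd_zero_def)

lemma gd_add_zero: "x \<in> gd_carrier m n \<Longrightarrow> gd_add m n x gd_zero = x"
  by (cases x) (auto simp: mem_C gd_zero_def)

fun gd_inv :: "nat \<Rightarrow> nat \<Rightarrow> gdih \<Rightarrow> gdih" where
  "gd_inv m n ((a,b),t) = (if t then ((a,b),t) else (((-a) mod int m, (-b) mod (4*int n)), False))"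

lemma gd_add_inv: "x \<in> gd_carrier m n \<Longrightarrow> gd_add m n x (gd_inv m n x) = gd_zero"
  by (cases x) (auto simp: mem_C gd_zero_def mod_simps)

lemma gd_inv_C: "m \<ge> 1 \<Longrightarrow> n \<ge> 1 \<Longrightarrow> x \<in> gd_carrier m n \<Longrightarrow> gd_inv m n x \<in> gd_carrier m n"
  by (cases x) (auto simp: mem_C)

lemma gd_inv_inv: "x \<in> gd_carrier m n \<Longrightarrow> gd_inv m n (gd_inv m n x) = x"
  by (cases x) (auto simp: mem_C mod_simps)

lemma gd_inv_bij: "m \<ge> 1 \<Longrightarrow> n \<ge> 1 \<Longrightarrow> bij_betw (gd_inv m n) (gd_carrier m n) (gd_carrier m n)"
  apply (rule bij_betw_byWitness[where f'="gd_inv m n"])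
  using gd_inv_inv gd_inv_C by auto

lemma gd_pow_rot: "gd_pow m n k ((a,b),False) = (((int k * a) mod int m, (int k * b) mod (4*int n)), False)"
  by (induction k) (auto simp: gd_zero_def mod_simps algebra_simps)



lemma least_dvd: "(d::nat) > 0 \<Longrightarrow> (LEAST k. 0 < k \<and> d dvd k) = d"
  by (rule Least_equality) (auto dest: dvd_imp_le)

lemma ord_rot_unit:
  assumes "m \<ge> 1" "n \<ge> 1" "coprime a (int m)"
  shows "gd_ord m n (((a mod int m), 0), False) = m"
proof -
  have "\<And>k. (gd_pow m n k (((a mod int m), 0), False) = gd_zero) \<longleftrightarrow> m dvd k"
  proof -
    fix k
    have "(gd_pow m n k (((a mod int m), 0), False) = gd_zero) \<longleftrightarrow> int m dvd int k * a"
      by (simp add: gd_pow_rot gd_zero_def mod_simps dvd_eq_mod_eq_0)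
    also have "\<dots> \<longleftrightarrow> int m dvd int k"
      using assms(3) by (metis coprime_commute coprime_dvd_mult_left_iff)
    finally show "?thesis k" by simp
  qed
  then show ?thesis unfolding gd_ord_def using least_dvd[of m] assms by simp
qed

lemma ord_rot_2:
  assumes "m \<ge> 1" "n \<ge> 1"
  shows "gd_ord m n ((0, 2), False) = 2*n"
proof -
  have "\<And>k. (gd_pow m n k ((0, 2), False) = gd_zero) \<longleftrightarrow> 2*n dvd k"
  proof -
    fix k
    have "(gd_pow m n k ((0, 2), False) = gd_zero) \<longleftrightarrow> 4 * int n dvd int k * 2"
      by (simp add: gd_pow_rot gd_zero_def dvd_eq_mod_eq_0)
    also have "\<dots> \<longleftrightarrow> 2 * int (2 * n) dvd 2 * int k" by (simp add: ac_simps)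
    also have "\<dots> \<longleftrightarrow> 2 * n dvd k" by (subst dvd_times_left_cancel_iff) (auto simp: int_dvd_int_iff[symmetric])
    finally show "?thesis k" .
  qed
  then show ?thesis unfolding gd_ord_def using least_dvd[of "2*n"] assms by simp
qed



fun phi :: "nat \<Rightarrow> nat \<Rightarrow> gdih \<Rightarrow> gdih" where
  "phi m n ((i,b),t) =
    (if \<not> t then (if b < 2*int n then ((i,b),False) else ((i,(b+2*int n) mod (4*int n)),True))
     else (if b < 2*int n then (((-i) mod int m, (-1-b) mod (4*int n)),False)
           else (((-i) mod int m, (2*int n-1-b) mod (4*int n)), True)))"

fun chi :: "nat \<Rightarrow> nat \<Rightarrow> int \<Rightarrow> gdih \<Rightarrow> gdih" where
  "chi m n k ((i,b),t) =
    (if \<not> t then (if b < 2*int n then (((k-2*i) mod int m, (-2*b) mod (4*int n)),False)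
                else (((2*i-k) mod int m, (2*b+2*int n) mod (4*int n)),True))
     else (if b < 2*int n then (((2*i-k) mod int m, (2*b+1) mod (4*int n)),True)
           else (((k-2*i) mod int m, (2*int n-1-2*b) mod (4*int n)), False)))"

lemma L1: "((a::int) + b mod c - d) mod c = (a + b - d) mod c"
  by (metis add_diff_eq diff_add_eq mod_add_left_eq mod_add_right_eq)
lemma L2: "((a::int) + (b + d mod c) - e) mod c = (a + (b + d) - e) mod c"
  by (metis L1 add.assoc add_diff_eq mod_add_left_eq mod_add_right_eq)

lemma row_complete:
  assumes "x \<in> gd_carrier m n"
  shows "gd_add m n (gd_add m n x (phi m n x)) (chi m n k x) = ((k mod int m, 0), False)"
proof -
  obtain i b t where x: "x = ((i,b),t)" by (metis prod.collapse)
  show ?thesis using assms unfolding x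
    by (auto simp: mem_C mod_simps algebra_simps L1 L2)
qed



lemma modeq_small: "0 < (c::int) \<Longrightarrow> x mod c = y mod c \<Longrightarrow> \<bar>x - y\<bar> < c \<Longrightarrow> x = y"
proof -
  assume c: "0 < c" and e: "x mod c = y mod c" and s: "\<bar>x - y\<bar> < c"
  from e have "c dvd (x - y)" by (simp add: mod_eq_dvd_iff)
  then obtain j where j: "x - y = c * j" by (auto simp: dvd_def)
  have "\<bar>c * j\<bar> < c" using s j by simp
  hence "\<bar>j\<bar> < 1" using c by (simp add: abs_mult)
  hence "j = 0" by simp
  thus "x = y" using j by simp
qed

lemma modval: "0 \<le> y \<Longrightarrow> y < (c::int) \<Longrightarrow> x = y + j*c \<Longrightarrow> x mod c = y"
  by simp

lemma even_mod_ev: "even (c::int) \<Longrightarrow> even (x mod c) \<longleftrightarrow> even x"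
  by (metis dvd_mod_iff)

lemma phi_explicit:
  assumes "((i,b),t) \<in> gd_carrier m n"
  shows "phi m n ((i,b),t) =
    (if \<not> t then (if b < 2*int n then ((i,b),False) else ((i,b - 2*int n),True))
     else (if b < 2*int n then (((-i) mod int m, 4*int n-1-b),False)
           else (((-i) mod int m, 6*int n-1-b), True)))"
proof -
  have b: "0 \<le> b" "b < 4 * int n" using assms by (auto simp: mem_C)
  show ?thesis
  proof (cases "b < 2 * int n")
    case True
    have "(-1-b) mod (4*int n) = 4*int n-1-b" by (rule modval[where j="-1"]) (use b True in auto)
    thus ?thesis using True by simp
  next
    case False
    have "(b + 2*int n) mod (4*int n) = b - 2*int n" by (rule modval[where j="1"]) (use b False in auto)
    moreover have "(2*int n-1-b) mod (4*int n) = 6*int n-1-b" by (rule modval[where j="-1"]) (use b False in auto)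
    ultimately show ?thesis using False by simp
  qed
qed

lemma phi_C: "m \<ge> 1 \<Longrightarrow> n \<ge> 1 \<Longrightarrow> x \<in> gd_carrier m n \<Longrightarrow> phi m n x \<in> gd_carrier m n"
proof -
  assume a: "m \<ge> 1" "n \<ge> 1" "x \<in> gd_carrier m n"
  obtain i b t where xx: "x = ((i,b),t)" by (metis prod.collapse)
  show ?thesis using a unfolding xx phi_explicit[OF a(3)[unfolded xx]] by (auto simp: mem_C)
qed

lemma chi_C: "m \<ge> 1 \<Longrightarrow> n \<ge> 1 \<Longrightarrow> chi m n k x \<in> gd_carrier m n"
  by (cases x) (auto simp: mem_C)

lemma phi_inj: assumes "m \<ge> 1" "n \<ge> 1" shows "inj_on (phi m n) (gd_carrier m n)"
proof (rule inj_onI)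
  fix x y assume x: "x \<in> gd_carrier m n" and y: "y \<in> gd_carrier m n" and e: "phi m n x = phi m n y"
  obtain i b t where xx: "x = ((i,b),t)" by (metis prod.collapse)
  obtain i2 b2 t2 where yy: "y = ((i2,b2),t2)" by (metis prod.collapse)
  have r: "0 \<le> i" "i < int m" "0 \<le> b" "b < 4*int n" "0 \<le> i2" "i2 < int m" "0 \<le> b2" "b2 < 4*int n"
    using x y by (auto simp: xx yy mem_C)
  have ii: "(-i) mod int m = (-i2) mod int m \<Longrightarrow> i = i2"
    using modeq_small[of "int m" "-i" "-i2"] r assms by auto
  have e2: "(if \<not> t then (if b < 2*int n then ((i,b),False) else ((i,b - 2*int n),True))
     else (if b < 2*int n then (((-i) mod int m, 4*int n-1-b),False)
           else (((-i) mod int m, 6*int n-1-b), True))) =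
    (if \<not> t2 then (if b2 < 2*int n then ((i2,b2),False) else ((i2,b2 - 2*int n),True))
     else (if b2 < 2*int n then (((-i2) mod int m, 4*int n-1-b2),False)
           else (((-i2) mod int m, 6*int n-1-b2), True)))"
    using e unfolding xx yy phi_explicit[OF x[unfolded xx]] phi_explicit[OF y[unfolded yy]] .
  show "x = y" using e2 ii r unfolding xx yy
    by (auto split: if_splits)
qed



lemma two_inj:
  assumes "odd m" "0 \<le> i" "i < int m" "0 \<le> i2" "i2 < int m"
    and "(2*i - a) mod int m = (2*i2 - a) mod int m"
  shows "i = i2"
proof -
  have "int m dvd (2*i - a) - (2*i2 - a)" using assms(6) by (simp add: mod_eq_dvd_iff)
  hence "int m dvd 2 * (i - i2)" by (simp add: algebra_simps)
  moreover have "coprime (int m) 2" using assms(1) by (simp add: coprime_commute)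
  ultimately have "int m dvd (i - i2)" using coprime_dvd_mult_right_iff by blast
  hence "i mod int m = i2 mod int m" by (simp add: mod_eq_dvd_iff)
  thus ?thesis using modeq_small[of "int m" i i2] assms by auto
qed

lemma two_inj':
  assumes "odd m" "0 \<le> i" "i < int m" "0 \<le> i2" "i2 < int m"
    and "(a - 2*i) mod int m = (a - 2*i2) mod int m"
  shows "i = i2"
proof -
  have "(2*i - a) mod int m = (2*i2 - a) mod int m"
    using assms(6) by (metis minus_diff_eq mod_minus_eq)
  thus ?thesis using two_inj assms by blast
qed

lemma chi_inj: assumes "odd m" "n \<ge> 1" shows "inj_on (chi m n k) (gd_carrier m n)"
proof (rule inj_onI)
  fix x y assume x: "x \<in> gd_carrier m n" and y: "y \<in> gd_carrier m n" and e: "chi m n k x = chi m n k y"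
  obtain i b t where xx: "x = ((i,b),t)" by (metis prod.collapse)
  obtain i2 b2 t2 where yy: "y = ((i2,b2),t2)" by (metis prod.collapse)
  have r: "0 \<le> i" "i < int m" "0 \<le> b" "b < 4*int n" "0 \<le> i2" "i2 < int m" "0 \<le> b2" "b2 < 4*int n"
    using x y by (auto simp: xx yy mem_C)
  have ev: "even (4 * int n)" by simp
  have par: "\<And>x. even (x mod (4 * int n)) \<longleftrightarrow> even x" using even_mod_ev[OF ev] by blast
  have Q: "0 < 4 * int n" using assms by simp
  have tt: "t = t2"
  proof -
    have "even (snd (fst (chi m n k x))) \<longleftrightarrow> \<not> t" unfolding xx by (auto simp: par)
    moreover have "even (snd (fst (chi m n k y))) \<longleftrightarrow> \<not> t2" unfolding yy by (auto simp: par)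
    ultimately show ?thesis using e by simp
  qed
  have hh: "(b < 2 * int n) = (b2 < 2 * int n)"
  proof -
    have "snd (chi m n k x) = (t \<noteq> (\<not> b < 2 * int n))" unfolding xx by auto
    moreover have "snd (chi m n k y) = (t2 \<noteq> (\<not> b2 < 2 * int n))" unfolding yy by auto
    ultimately show ?thesis using e tt by auto
  qed
  have s1: "\<bar>(-2*b) - (-2*b2)\<bar> < 4 * int n" if "b < 2 * int n" "b2 < 2 * int n" using that r by auto
  have s2: "\<bar>(2*b+1) - (2*b2+1)\<bar> < 4 * int n" if "b < 2 * int n" "b2 < 2 * int n" using that r by auto
  have s3: "\<bar>(2*b+2*int n) - (2*b2+2*int n)\<bar> < 4 * int n" if "\<not> b < 2 * int n" "\<not> b2 < 2 * int n" using that r by auto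
  have s4: "\<bar>(2*int n-1-2*b) - (2*int n-1-2*b2)\<bar> < 4 * int n" if "\<not> b < 2 * int n" "\<not> b2 < 2 * int n" using that r by auto
  have T2: "i = i2" if "(2*i - k) mod int m = (2*i2 - k) mod int m" using two_inj[OF assms(1) r(1,2,5,6) that] .
  have T2': "i = i2" if "(k - 2*i) mod int m = (k - 2*i2) mod int m" using two_inj'[OF assms(1) r(1,2,5,6) that] .
  have "i = i2 \<and> b = b2"
  proof (cases t)
    case True
    show ?thesis
    proof (cases "b < 2 * int n")
      case h: True
      with hh have h2: "b2 < 2 * int n" by simp
      have "(2*i - k) mod int m = (2*i2 - k) mod int m" "(2*b+1) mod (4*int n) = (2*b2+1) mod (4*int n)"
        using e True tt h h2 unfolding xx yy by simp_all
      thus ?thesis using T2 modeq_small[OF Q] s2[OF h h2] by fastforce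
    next
      case h: False
      with hh have h2: "\<not> b2 < 2 * int n" by simp
      have "(k - 2*i) mod int m = (k - 2*i2) mod int m" "(2*int n-1-2*b) mod (4*int n) = (2*int n-1-2*b2) mod (4*int n)"
        using e True tt h h2 unfolding xx yy by simp_all
      thus ?thesis using T2' modeq_small[OF Q] s4[OF h h2] by fastforce
    qed
  next
    case False
    show ?thesis
    proof (cases "b < 2 * int n")
      case h: True
      with hh have h2: "b2 < 2 * int n" by simp
      have "(k - 2*i) mod int m = (k - 2*i2) mod int m" "(-2*b) mod (4*int n) = (-2*b2) mod (4*int n)"
        using e False tt h h2 unfolding xx yy by simp_all
      thus ?thesis using T2' modeq_small[OF Q] s1[OF h h2] by fastforce
    next
      case h: False
      with hh have h2: "\<not> b2 < 2 * int n" by simp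
      have "(2*i - k) mod int m = (2*i2 - k) mod int m" "(2*b+2*int n) mod (4*int n) = (2*b2+2*int n) mod (4*int n)"
        using e False tt h h2 unfolding xx yy by simp_all
      thus ?thesis using T2 modeq_small[OF Q] s3[OF h h2] by fastforce
    qed
  qed
  then have ieq: "i = i2" and beq: "b = b2" by auto
  show "x = y" using ieq beq tt unfolding xx yy by simp
qed

lemma bij_endo: "finite A \<Longrightarrow> (\<And>x. x \<in> A \<Longrightarrow> f x \<in> A) \<Longrightarrow> inj_on f A \<Longrightarrow> bij_betw f A A"
  unfolding bij_betw_def using endo_inj_surj[of A f] by blast

lemma finite_C: "finite (gd_carrier m n)"
proof -
  have "gd_carrier m n = ({0..<int m} \<times> {0..<4*int n}) \<times> UNIV" by (auto simp: gd_carrier_def)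
  thus ?thesis by simp
qed

lemma card_C: "card (gd_carrier m n) = 8*m*n"
proof -
  have "gd_carrier m n = ({0..<int m} \<times> {0..<4*int n}) \<times> UNIV" by (auto simp: gd_carrier_def)
  moreover have "nat (4 * int n) = 4*n" by linarith
  ultimately show ?thesis by (simp add: card_cartesian_product)
qed

lemma phi_bij: "m \<ge> 1 \<Longrightarrow> n \<ge> 1 \<Longrightarrow> bij_betw (phi m n) (gd_carrier m n) (gd_carrier m n)"
  by (rule bij_endo) (auto simp: finite_C phi_C phi_inj)

lemma chi_bij: "m \<ge> 1 \<Longrightarrow> odd m \<Longrightarrow> n \<ge> 1 \<Longrightarrow> bij_betw (chi m n k) (gd_carrier m n) (gd_carrier m n)"
  by (rule bij_endo) (auto simp: finite_C chi_C chi_inj)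



definition "r1 n = (((0::int), int n - 1), False)"
definition "r2 n = (((0::int), 3*int n - 2), True)"
definition "r3 m n = ((1 mod int m, int n - 1), True)"

definition sig :: "nat \<Rightarrow> nat \<Rightarrow> gdih \<Rightarrow> gdih" where
  "sig m n x = (if x = r1 n then r3 m n else if x = r2 n then r1 n else if x = r3 m n then r2 n else x)"
definition rho :: "nat \<Rightarrow> nat \<Rightarrow> gdih \<Rightarrow> gdih" where
  "rho m n x = (if x = r1 n then r2 n else if x = r2 n then r3 m n else if x = r3 m n then r1 n else x)"

definition R3 :: "nat \<Rightarrow> nat \<Rightarrow> gdih \<Rightarrow> gdih" where
  "R3 m n x = gd_add m n (gd_add m n x (phi m n (sig m n x))) (chi m n 1 (rho m n x))"

lemma r_distinct: "n \<ge> 3 \<Longrightarrow> r1 n \<noteq> r2 n \<and> r1 n \<noteq> r3 m n \<and> r2 n \<noteq> r3 m n \<and> r2 n \<noteq> r1 n \<and> r3 m n \<noteq> r1 n \<and> r3 m n \<noteq> r2 n"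
  by (auto simp: r1_def r2_def r3_def)

lemma r_C: "m \<ge> 1 \<Longrightarrow> n \<ge> 3 \<Longrightarrow> r1 n \<in> gd_carrier m n \<and> r2 n \<in> gd_carrier m n \<and> r3 m n \<in> gd_carrier m n"
  by (auto simp: r1_def r2_def r3_def mem_C)

lemma sig_bij: assumes "m \<ge> 1" "n \<ge> 3" shows "bij_betw (sig m n) (gd_carrier m n) (gd_carrier m n)"
proof (rule bij_endo[OF finite_C])
  show "\<And>x. x \<in> gd_carrier m n \<Longrightarrow> sig m n x \<in> gd_carrier m n" using r_C[OF assms] by (auto simp: sig_def)
  show "inj_on (sig m n) (gd_carrier m n)" using r_distinct[OF assms(2), of m]
    unfolding inj_on_def sig_def by (auto split: if_splits)
qed

lemma rho_bij: assumes "m \<ge> 1" "n \<ge> 3" shows "bij_betw (rho m n) (gd_carrier m n) (gd_carrier m n)"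
proof (rule bij_endo[OF finite_C])
  show "\<And>x. x \<in> gd_carrier m n \<Longrightarrow> rho m n x \<in> gd_carrier m n" using r_C[OF assms] by (auto simp: rho_def)
  show "inj_on (rho m n) (gd_carrier m n)" using r_distinct[OF assms(2), of m]
    unfolding inj_on_def rho_def by (auto split: if_splits)
qed

lemma R3_generic: assumes "x \<in> gd_carrier m n" "x \<noteq> r1 n" "x \<noteq> r2 n" "x \<noteq> r3 m n"
  shows "R3 m n x = ((1 mod int m, 0), False)"
  using row_complete[OF assms(1), of 1] assms by (simp add: R3_def sig_def rho_def)

lemma R3_r1: assumes "m \<ge> 1" "n \<ge> 3" shows "R3 m n (r1 n) = ((0, 2), False)"
proof -
  have "R3 m n (r1 n) = gd_add m n (gd_add m n (r1 n) (phi m n (r3 m n))) (chi m n 1 (r2 n))"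
    using r_distinct[OF assms(2), of m] by (simp add: R3_def sig_def rho_def)
  also have "\<dots> = ((0, 2), False)"
  proof -
    have e: "(int n - 1 + (-1 - (int n - 1)) + (2 * int n - 1 - 2 * (3 * int n - 2))) = 2 + (-1) * (4 * int n)" by simp
    have "(int n - 1 + (-1 - (int n - 1)) + (2 * int n - 1 - 2 * (3 * int n - 2))) mod (4 * int n) = 2"
      by (rule modval[OF _ _ e]) (use assms in auto)
    then show ?thesis using assms by (simp add: r1_def r2_def r3_def mod_simps L1 L2)
  qed
  finally show ?thesis .
qed

lemma aux12: "(1 - 2 * (1 mod (M::int))) mod M = (- 1) mod M"
proof -
  have "(1 - 2 * (1 mod M)) mod M = (1 - (2 * (1 mod M)) mod M) mod M" by (simp add: mod_diff_right_eq)
  also have "\<dots> = (1 - (2 * 1) mod M) mod M" by (simp add: mod_mult_right_eq)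
  also have "\<dots> = (1 - 2) mod M" by (simp add: mod_diff_right_eq)
  finally show ?thesis by simp
qed

lemma R3_r2: assumes "m \<ge> 1" "n \<ge> 3" shows "R3 m n (r2 n) = (((-1) mod int m, 0), False)"
proof -
  have "R3 m n (r2 n) = gd_add m n (gd_add m n (r2 n) (phi m n (r1 n))) (chi m n 1 (r3 m n))"
    using r_distinct[OF assms(2), of m] by (simp add: R3_def sig_def rho_def)
  also have "\<dots> = (((-1) mod int m, 0), False)"
    using assms by (simp add: r1_def r2_def r3_def mod_simps L1 L2 aux12)
  finally show ?thesis .
qed

lemma R3_r3: assumes "m \<ge> 1" "n \<ge> 3" shows "R3 m n (r3 m n) = ((2 mod int m, 0), False)"
proof -
  have "R3 m n (r3 m n) = gd_add m n (gd_add m n (r3 m n) (phi m n (r2 n))) (chi m n 1 (r1 n))"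
    using r_distinct[OF assms(2), of m] by (simp add: R3_def sig_def rho_def)
  also have "\<dots> = ((2 mod int m, 0), False)"
    using assms by (simp add: r1_def r2_def r3_def mod_simps L1 L2)
  finally show ?thesis .
qed



lemma ord_R3:
  assumes "m \<ge> 1" "odd m" "n \<ge> 3" "x \<in> gd_carrier m n"
  shows "gd_ord m n (R3 m n x) = (if x = r1 n then 2*n else m)"
proof -
  have n1: "n \<ge> 1" using assms by simp
  consider "x = r1 n" | "x = r2 n" | "x = r3 m n" | "x \<noteq> r1 n \<and> x \<noteq> r2 n \<and> x \<noteq> r3 m n" by blast
  then show ?thesis
  proof cases
    case 1 then show ?thesis using R3_r1[OF assms(1,3)] ord_rot_2[OF assms(1) n1] by simp
  next
    case 2
    have "coprime (-1::int) (int m)" by simp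
    then have "gd_ord m n (((-1) mod int m, 0), False) = m" by (rule ord_rot_unit[OF assms(1) n1])
    moreover have "x \<noteq> r1 n" using 2 r_distinct[OF assms(3), of m] by blast
    ultimately show ?thesis using 2 R3_r2[OF assms(1,3)] by presburger
  next
    case 3
    have "coprime (2::int) (int m)" using assms(2) by simp
    then have "gd_ord m n ((2 mod int m, 0), False) = m" by (rule ord_rot_unit[OF assms(1) n1])
    moreover have "x \<noteq> r1 n" using 3 r_distinct[OF assms(3), of m] by blast
    ultimately show ?thesis using 3 R3_r3[OF assms(1,3)] by presburger
  next
    case 4
    have "coprime (1::int) (int m)" by simp
    then show ?thesis using 4 R3_generic[OF assms(4)] ord_rot_unit[OF assms(1) n1] by simp
  qed
qed

definition col :: "nat \<Rightarrow> nat \<Rightarrow> nat \<Rightarrow> nat \<Rightarrow> gdih \<Rightarrow> gdih" where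
  "col m n g j x = (if odd g then
     (if j = 0 then x else if j = 1 then phi m n (sig m n x) else if j = 2 then chi m n 1 (rho m n x)
      else if even (j - 3) then x else gd_inv m n x)
   else
     (if j = 0 then x else if j = 1 then phi m n (sig m n x)
      else if j = 2 then gd_inv m n (chi m n 0 (chi m n 1 (rho m n x)))
      else if j = 3 then gd_inv m n (phi m n (chi m n 1 (rho m n x)))
      else if even (j - 4) then x else gd_inv m n x))"

lemma col_bij:
  assumes "m \<ge> 1" "odd m" "n \<ge> 3"
  shows "bij_betw (col m n g j) (gd_carrier m n) (gd_carrier m n)"
proof -
  have n1: "n \<ge> 1" using assms by simp
  note bs = phi_bij[OF assms(1) n1] chi_bij[OF assms(1,2) n1] gd_inv_bij[OF assms(1) n1]
    sig_bij[OF assms(1,3)] rho_bij[OF assms(1,3)] bij_betw_id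
  have cmp: "\<And>f h. bij_betw f (gd_carrier m n) (gd_carrier m n) \<Longrightarrow> bij_betw h (gd_carrier m n) (gd_carrier m n)
     \<Longrightarrow> bij_betw (\<lambda>x. h (f x)) (gd_carrier m n) (gd_carrier m n)"
  proof -
    fix f h assume "bij_betw f (gd_carrier m n) (gd_carrier m n)" "bij_betw h (gd_carrier m n) (gd_carrier m n)"
    from bij_betw_trans[OF this] show "bij_betw (\<lambda>x. h (f x)) (gd_carrier m n) (gd_carrier m n)"
      by (simp add: o_def)
  qed
  have b1: "bij_betw (\<lambda>x. phi m n (sig m n x)) (gd_carrier m n) (gd_carrier m n)" using cmp bs by blast
  have b2: "bij_betw (\<lambda>x. chi m n 1 (rho m n x)) (gd_carrier m n) (gd_carrier m n)" using cmp bs by blast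
  have b3: "bij_betw (\<lambda>x. gd_inv m n (chi m n 0 (chi m n 1 (rho m n x)))) (gd_carrier m n) (gd_carrier m n)"
    using cmp[OF cmp[OF b2 bs(2)] bs(3)] .
  have b4: "bij_betw (\<lambda>x. gd_inv m n (phi m n (chi m n 1 (rho m n x)))) (gd_carrier m n) (gd_carrier m n)"
    using cmp[OF cmp[OF b2 bs(1)] bs(3)] .
  have bid: "bij_betw (\<lambda>x. x) (gd_carrier m n) (gd_carrier m n)" using bij_betw_id unfolding id_def .
  have ifb: "\<And>P f h. bij_betw f (gd_carrier m n) (gd_carrier m n) \<Longrightarrow> bij_betw h (gd_carrier m n) (gd_carrier m n)
     \<Longrightarrow> bij_betw (\<lambda>x. if P then f x else h x) (gd_carrier m n) (gd_carrier m n)"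
    by (case_tac P) simp_all
  show ?thesis unfolding col_def[abs_def]
    by (intro ifb b1 b2 b3 b4 bid bs(3))
qed



lemma tail_fold:
  assumes "m \<ge> 1" "n \<ge> 1" "a \<in> gd_carrier m n" "x \<in> gd_carrier m n"
  shows "foldl (gd_add m n) a (map (\<lambda>j. if even (j - b) then x else gd_inv m n x) [b..<b+2*k]) = a"
proof (induction k)
  case 0 then show ?case by simp
next
  case (Suc k)
  have u: "[b..<b+2*Suc k] = [b..<b+2*k] @ [b+2*k, b+2*k+1]" by (simp add: upt_add_eq_append[symmetric])
  have "foldl (gd_add m n) a (map (\<lambda>j. if even (j - b) then x else gd_inv m n x) [b..<b+2*Suc k])
      = gd_add m n (gd_add m n a x) (gd_inv m n x)"
    unfolding u using Suc by (simp del: gd_inv.simps)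
  also have "\<dots> = a" using assms by (simp only: gd_add_assoc gd_add_inv gd_add_zero)
  finally show ?case .
qed

lemma inv_pair:
  assumes "m \<ge> 1" "n \<ge> 1" "z \<in> gd_carrier m n"
  shows "gd_add m n (gd_inv m n (chi m n 0 z)) (gd_inv m n (phi m n z)) = z"
proof -
  have pC: "phi m n z \<in> gd_carrier m n" using phi_C assms by blast
  have cC: "chi m n 0 z \<in> gd_carrier m n" using chi_C assms by blast
  have zp: "gd_add m n z (phi m n z) \<in> gd_carrier m n" using gd_add_C assms by blast
  have c: "gd_add m n (gd_add m n z (phi m n z)) (chi m n 0 z) = gd_zero"
    using row_complete[OF assms(3), of 0] by (simp add: gd_zero_def)
  have "gd_inv m n (chi m n 0 z) = gd_add m n gd_zero (gd_inv m n (chi m n 0 z))"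
    using gd_zero_add gd_inv_C[OF assms(1,2) cC] by simp
  also have "\<dots> = gd_add m n (gd_add m n z (phi m n z)) (gd_add m n (chi m n 0 z) (gd_inv m n (chi m n 0 z)))"
    by (simp only: c[symmetric] gd_add_assoc)
  also have "\<dots> = gd_add m n z (phi m n z)" using gd_add_inv[OF cC] gd_add_zero[OF zp] by simp
  finally have e: "gd_inv m n (chi m n 0 z) = gd_add m n z (phi m n z)" .
  have "gd_add m n (gd_inv m n (chi m n 0 z)) (gd_inv m n (phi m n z))
     = gd_add m n z (gd_add m n (phi m n z) (gd_inv m n (phi m n z)))" by (simp only: e gd_add_assoc)
  also have "\<dots> = z" by (simp only: gd_add_inv[OF pC] gd_add_zero[OF assms(3)])
  finally show ?thesis .
qed

lemma rowsum_col:
  assumes "m \<ge> 1" "odd m" "n \<ge> 3" "g \<ge> 3" "x \<in> gd_carrier m n"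
  shows "foldl (gd_add m n) gd_zero (map (\<lambda>j. col m n g j x) [0..<g]) = R3 m n x"
proof -
  have n1: "n \<ge> 1" using assms by simp
  have xC: "x \<in> gd_carrier m n" by fact
  have RC: "R3 m n x \<in> gd_carrier m n" unfolding R3_def using gd_add_C assms n1 by blast
  show ?thesis
  proof (cases "odd g")
    case True
    define k where "k = (g - 3) div 2"
    have g: "g = 3 + 2*k" unfolding k_def using True assms(4) by presburger
    have u: "[0..<g] = [0..<3] @ [3..<3+2*k]" unfolding g by (simp add: upt_add_eq_append[symmetric])
    have m1: "map (\<lambda>j. col m n g j x) [0..<3] = [x, phi m n (sig m n x), chi m n 1 (rho m n x)]"
      using True by (simp add: col_def numeral_3_eq_3 upt_rec)
    have m2: "map (\<lambda>j. col m n g j x) [3..<3+2*k] = map (\<lambda>j. if even (j - 3) then x else gd_inv m n x) [3..<3+2*k]"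
      using True by (intro map_cong) (auto simp: col_def simp del: gd_inv.simps)
    have f1: "foldl (gd_add m n) gd_zero [x, phi m n (sig m n x), chi m n 1 (rho m n x)] = R3 m n x"
      using gd_zero_add[OF xC] by (simp add: R3_def)
    show ?thesis unfolding u map_append foldl_append m1 m2 f1
      using tail_fold[OF assms(1) n1 RC xC] .
  next
    case False
    define k where "k = (g - 4) div 2"
    have g: "g = 4 + 2*k" unfolding k_def using False assms(4) by presburger
    define z where "z = chi m n 1 (rho m n x)"
    have zC: "z \<in> gd_carrier m n" unfolding z_def using chi_C assms n1 by blast
    have u: "[0..<g] = [0..<4] @ [4..<4+2*k]" unfolding g by (simp add: upt_add_eq_append[symmetric])
    have m1: "map (\<lambda>j. col m n g j x) [0..<4] = [x, phi m n (sig m n x), gd_inv m n (chi m n 0 z), gd_inv m n (phi m n z)]"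
      using False by (simp add: col_def upt_rec z_def del: gd_inv.simps)
    have m2: "map (\<lambda>j. col m n g j x) [4..<4+2*k] = map (\<lambda>j. if even (j - 4) then x else gd_inv m n x) [4..<4+2*k]"
      using False by (intro map_cong) (auto simp: col_def simp del: gd_inv.simps)
    have f1: "foldl (gd_add m n) gd_zero [x, phi m n (sig m n x), gd_inv m n (chi m n 0 z), gd_inv m n (phi m n z)] = R3 m n x"
    proof -
      have "foldl (gd_add m n) gd_zero [x, phi m n (sig m n x), gd_inv m n (chi m n 0 z), gd_inv m n (phi m n z)]
        = gd_add m n (gd_add m n x (phi m n (sig m n x))) (gd_add m n (gd_inv m n (chi m n 0 z)) (gd_inv m n (phi m n z)))"
        using gd_zero_add[OF xC] by (simp only: foldl_Cons foldl_Nil gd_add_assoc)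
      also have "\<dots> = gd_add m n (gd_add m n x (phi m n (sig m n x))) z" by (simp only: inv_pair[OF assms(1) n1 zC])
      also have "\<dots> = R3 m n x" by (simp add: R3_def z_def)
      finally show ?thesis .
    qed
    show ?thesis unfolding u map_append foldl_append m1 m2 f1
      using tail_fold[OF assms(1) n1 RC xC] .
  qed
qed


lemma mset_final:
  assumes "m \<ge> 1" "odd m" "n \<ge> 3"
  shows "image_mset (\<lambda>x. gd_ord m n (R3 m n x)) (mset_set (gd_carrier m n)) = replicate_mset (8*m*n - 1) m + {#2*n#}"
proof -
  let ?C = "gd_carrier m n"
  have r1C: "r1 n \<in> ?C" using r_C[OF assms(1,3)] by blast
  have "mset_set ?C = add_mset (r1 n) (mset_set (?C - {r1 n}))" using mset_set.remove[OF finite_C r1C] .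
  hence "image_mset (\<lambda>x. gd_ord m n (R3 m n x)) (mset_set ?C)
      = add_mset (2*n) (image_mset (\<lambda>x. gd_ord m n (R3 m n x)) (mset_set (?C - {r1 n})))"
    using ord_R3[OF assms r1C] by simp
  also have "image_mset (\<lambda>x. gd_ord m n (R3 m n x)) (mset_set (?C - {r1 n})) = image_mset (\<lambda>x. m) (mset_set (?C - {r1 n}))"
    by (rule image_mset_cong) (use ord_R3[OF assms] finite_C in auto)
  also have "\<dots> = replicate_mset (card (?C - {r1 n})) m" by (simp add: image_mset_const_eq)
  also have "card (?C - {r1 n}) = 8*m*n - 1" using card_C r1C finite_C by simp
  finally show ?thesis by simp
qed

theorem mainTheorem12:
  fixes m n g :: nat
  assumes "m \<ge> 1" "odd m" "n \<ge> 3" "odd n" "g \<ge> 3"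
  shows "\<exists>M. is_RSM m n g (replicate_mset (8*m*n - 1) m + {#2*n#}) M"
proof -
  let ?C = "gd_carrier m n"
  obtain e where e: "bij_betw e {0..<card ?C} ?C" using ex_bij_betw_nat_finite[OF finite_C] by blast
  define M where "M = (\<lambda>i j. col m n g j (e i))"
  have cols: "\<forall>j<g. bij_betw (\<lambda>i. M i j) {..<card ?C} ?C"
  proof (intro allI impI)
    fix j
    have "bij_betw (col m n g j \<circ> e) {0..<card ?C} ?C" using bij_betw_trans[OF e col_bij[OF assms(1,2,3)]] .
    thus "bij_betw (\<lambda>i. M i j) {..<card ?C} ?C" by (simp add: M_def o_def atLeast0LessThan)
  qed
  have rs: "\<And>i. i < card ?C \<Longrightarrow> row_sum m n M g i = R3 m n (e i)"
  proof -
    fix i assume "i < card ?C"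
    hence "e i \<in> ?C" using e by (auto simp: bij_betw_def)
    thus "row_sum m n M g i = R3 m n (e i)"
      unfolding row_sum_def M_def using rowsum_col[OF assms(1,2,3,5)] by blast
  qed
  have "image_mset (\<lambda>i. gd_ord m n (row_sum m n M g i)) (mset [0..<card ?C])
      = image_mset (\<lambda>i. gd_ord m n (R3 m n (e i))) (mset_set {0..<card ?C})"
    unfolding mset_upt by (rule image_mset_cong) (use rs in auto)
  also have "\<dots> = image_mset (\<lambda>x. gd_ord m n (R3 m n x)) (image_mset e (mset_set {0..<card ?C}))"
    by (simp add: image_mset.compositionality o_def)
  also have "image_mset e (mset_set {0..<card ?C}) = mset_set ?C"
    using e by (simp add: image_mset_mset_set bij_betw_def)
  also have "image_mset (\<lambda>x. gd_ord m n (R3 m n x)) (mset_set ?C) = replicate_mset (8*m*n - 1) m + {#2*n#}"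
    by (rule mset_final[OF assms(1,2,3)])
  finally show ?thesis using cols unfolding is_RSM_def by blast
qed

end
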